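(* In $V_q$ one has, for $0\le n\le r-2$, $e_1e_n=-\epsilon_n\epsilon_{n+1}e_{n-1}+e_{n+1}$ (with the convention $e_{-1}=e_{r-1}=0$). Consequently $e_n=P_n(e_1)$ for $0\le n\le r-2$, $P_{r-1}$ is the characteristic polynomial of multiplication by $e_1$ on $V_q$, and $P\mapsto P(e_1)$ induces an algebra isomorphism $\mathbb{Q}[X]/(P_{r-1})\cong V_q$. Moreover $P_n$ is even (resp. odd) when $n$ is even (resp. odd).
   Context: Let $r\ge 3$ and $s$ be coprime odd integers with $0<s<r$, $q=\exp(i\pi s/r)$. For an integer $n$ put $[n]=\frac{q^n-q^{-n}}{q-q^{-1}}$, $[n]!=[n][n-1]\cdots[1]$, and for $1\le n\le r-1$ let $\epsilon_n=\operatorname{sign}[n]=(-1)^{\lfloor ns/r\rfloor}$ (so $\epsilon_1=1$ and $\epsilon_n=\epsilon_{r-n}$); set $\epsilon_0=\epsilon_r=0$. A triple $(i,j,k)\in\{0,\dots,r-2\}^3$ is $r$-admissible if $i\le j+k$, $j\le i+k$, $k\le i+j$, $i+j+k$ is even and $i+j+k\le 2r-4$; for such a triple write $i=b+c$, $j=a+c$, $k=a+b$ and set $\langle i,j,k\rangle=(-1)^{a+b+c}\frac{[a+b+c+1]![a]![b]![c]!}{[a+b]![a+c]![b+c]!}$. Let $V_q$ be the $\mathbb{Q}$-vector space with basis $e_0,\dots,e_{r-2}$, with the symmetric bilinear form $\eta$ for which this basis is orthogonal and $\eta(e_i,e_i)=(-1)^i\epsilon_{i+1}$, and the symmetric trilinear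 form $\omega$ with $\omega(e_i,e_j,e_k)=\operatorname{sign}\langle i,j,k\rangle$ if $(i,j,k)$ is $r$-admissible and $0$ otherwise. The product on $V_q$ is defined by $\eta(x\cdot y,z)=\omega(x,y,z)$, giving a commutative associative unital algebra with unit $e_0$. Define $P_n\in\mathbb{Z}[X]$ by $P_0=1$, $P_1=X$, $P_{n+1}=XP_n+\epsilon_n\epsilon_{n+1}P_{n-1}$ for $1\le n\le r-2$. *)

theory Defs
  imports Complex_Main "HOL-Computational_Algebra.Polynomial" "Jordan_Normal_Form.Char_Poly"
begin

definition qq :: "nat \<Rightarrow> nat \<Rightarrow> complex" where
  "qq r s = exp (\<i> * of_real (pi * real s / real r))"

definition qint :: "nat \<Rightarrow> nat \<Rightarrow> nat \<Rightarrow> complex" where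
  "qint r s n = (qq r s ^ n - inverse (qq r s) ^ n) / (qq r s - inverse (qq r s))"

definition qfact :: "nat \<Rightarrow> nat \<Rightarrow> nat \<Rightarrow> complex" where
  "qfact r s n = (\<Prod>m\<in>{1..n}. qint r s m)"

definition rsign :: "real \<Rightarrow> int" where
  "rsign x = (if x > 0 then 1 else if x < 0 then -1 else 0)"

text \<open>epsilon_n = sign [n] for 1 <= n <= r-1, and epsilon_0 = epsilon_r = 0
  ([n] is real; we take the sign of its real part)\<close>
definition eps :: "nat \<Rightarrow> nat \<Rightarrow> nat \<Rightarrow> int" where
  "eps r s n = (if 1 \<le> n \<and> n \<le> r - 1 then rsign (Re (qint r s n)) else 0)"

definition admissible :: "nat \<Rightarrow> nat \<Rightarrow> nat \<Rightarrow> nat \<Rightarrow> bool" where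
  "admissible r i j k \<longleftrightarrow> i \<le> r - 2 \<and> j \<le> r - 2 \<and> k \<le> r - 2 \<and>
     i \<le> j + k \<and> j \<le> i + k \<and> k \<le> i + j \<and> even (i + j + k) \<and> i + j + k \<le> 2 * r - 4"

text \<open>For admissible (i,j,k): i = b+c, j = a+c, k = a+b.\<close>
definition tri :: "nat \<Rightarrow> nat \<Rightarrow> nat \<Rightarrow> nat \<Rightarrow> nat \<Rightarrow> complex" where
  "tri r s i j k = (let a = (j + k - i) div 2; b = (i + k - j) div 2; c = (i + j - k) div 2 in
     (-1) ^ (a + b + c) * qfact r s (a + b + c + 1) * qfact r s a * qfact r s b * qfact r s c
       / (qfact r s (a + b) * qfact r s (a + c) * qfact r s (b + c)))"

definition omega :: "nat \<Rightarrow> nat \<Rightarrow> nat \<Rightarrow> nat \<Rightarrow> nat \<Rightarrow> rat" where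
  "omega r s i j k = (if admissible r i j k then of_int (rsign (Re (tri r s i j k))) else 0)"

definition eta :: "nat \<Rightarrow> nat \<Rightarrow> nat \<Rightarrow> rat" where
  "eta r s i = (-1) ^ i * of_int (eps r s (i + 1))"

text \<open>Elements of V_q are represented by coordinate functions nat => rat w.r.t.
  the basis e_0, ..., e_(r-2), vanishing outside {0..r-2}.\<close>
definition Vq :: "nat \<Rightarrow> (nat \<Rightarrow> rat) set" where
  "Vq r = {x. \<forall>k. r - 2 < k \<longrightarrow> x k = 0}"

definition ebas :: "nat \<Rightarrow> nat \<Rightarrow> nat \<Rightarrow> rat" where
  "ebas r n = (\<lambda>k. if k = n \<and> n \<le> r - 2 then 1 else 0)"

definition vadd :: "(nat \<Rightarrow> rat) \<Rightarrow> (nat \<Rightarrow> rat) \<Rightarrow> nat \<Rightarrow> rat" where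
  "vadd x y = (\<lambda>k. x k + y k)"

definition vscale :: "rat \<Rightarrow> (nat \<Rightarrow> rat) \<Rightarrow> nat \<Rightarrow> rat" where
  "vscale c x = (\<lambda>k. c * x k)"

text \<open>The product determined by eta(x.y, z) = omega(x, y, z).\<close>
definition vmult :: "nat \<Rightarrow> nat \<Rightarrow> (nat \<Rightarrow> rat) \<Rightarrow> (nat \<Rightarrow> rat) \<Rightarrow> nat \<Rightarrow> rat" where
  "vmult r s x y = (\<lambda>k. if k \<le> r - 2 then
      (\<Sum>i\<le>r - 2. \<Sum>j\<le>r - 2. x i * y j * omega r s i j k) / eta r s k else 0)"

definition vpow :: "nat \<Rightarrow> nat \<Rightarrow> (nat \<Rightarrow> rat) \<Rightarrow> nat \<Rightarrow> nat \<Rightarrow> rat" where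
  "vpow r s x n = (vmult r s x ^^ n) (ebas r 0)"

definition veval :: "nat \<Rightarrow> nat \<Rightarrow> rat poly \<Rightarrow> (nat \<Rightarrow> rat) \<Rightarrow> nat \<Rightarrow> rat" where
  "veval r s p x = (\<lambda>k. \<Sum>m\<le>degree p. coeff p m * vpow r s x m k)"

fun Ppoly :: "nat \<Rightarrow> nat \<Rightarrow> nat \<Rightarrow> int poly" where
  "Ppoly r s 0 = 1"
| "Ppoly r s (Suc 0) = [:0, 1:]"
| "Ppoly r s (Suc (Suc n)) = [:0, 1:] * Ppoly r s (Suc n)
      + Polynomial.smult (eps r s (Suc n) * eps r s (Suc (Suc n))) (Ppoly r s n)"

definition multmat :: "nat \<Rightarrow> nat \<Rightarrow> rat mat" where
  "multmat r s = mat (r - 1) (r - 1) (\<lambda>(k, j). vmult r s (ebas r 1) (ebas r j) k)"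

end

theory Submission
  imports Defs
begin

locale VQ =
  fixes r s :: nat
  assumes r3: "3 \<le> r" and s_odd: "odd s" and cop: "coprime r s" and s_pos: "0 < s" and s_lt: "s < r"
begin

definition th :: real where "th = pi * real s / real r"
definition qr :: "nat \<Rightarrow> real" where "qr n = sin (real n * th) / sin th"
definition sg :: "nat \<Rightarrow> int" where "sg n = (-1) ^ (n * s div r)"

lemma sin_th_pos: "sin th > 0"
proof -
  have "0 < th" using s_pos r3 by (simp add: th_def)
  moreover have "th < pi" using s_lt r3 by (simp add: th_def field_simps)
  ultimately show ?thesis by (rule sin_gt_zero)
qed

lemma qq_cis: "qq r s = cis th"
  by (simp add: qq_def cis_conv_exp th_def mult.commute)

lemma qint_real: "qint r s n = complex_of_real (qr n)"
proof -
  have ne: "sin th \<noteq> 0" using sin_th_pos by simp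
  have "qq r s ^ n - inverse (qq r s) ^ n = cis (real n * th) - cis (- (real n * th))"
    by (simp add: qq_cis DeMoivre)
  also have "\<dots> = 2 * \<i> * complex_of_real (sin (real n * th))"
    by (simp add: cis.ctr complex_eq_iff)
  finally have 1: "qq r s ^ n - inverse (qq r s) ^ n = 2 * \<i> * complex_of_real (sin (real n * th))" .
  have "qq r s - inverse (qq r s) = cis th - cis (- th)" by (simp add: qq_cis)
  also have "\<dots> = 2 * \<i> * complex_of_real (sin th)"
    by (simp add: cis.ctr complex_eq_iff)
  finally have 2: "qq r s - inverse (qq r s) = 2 * \<i> * complex_of_real (sin th)" .
  show ?thesis using ne by (simp add: qint_def 1 2 qr_def)
qed

lemma ndvd: assumes "1 \<le> n" "n \<le> r - 1" shows "\<not> r dvd n * s"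
proof
  assume "r dvd n * s"
  hence "r dvd n" using cop by (simp add: coprime_dvd_mult_left_iff)
  thus False using assms by (auto dest: dvd_imp_le)
qed

lemma sin_sign: assumes "1 \<le> n" "n \<le> r - 1"
  shows "sin (real n * th) = (-1) ^ (n * s div r) * sin (pi * real (n * s mod r) / real r)"
    and "sin (pi * real (n * s mod r) / real r) > 0"
proof -
  define m where "m = n * s div r"
  define t where "t = n * s mod r"
  have ns: "n * s = m * r + t" by (simp add: m_def t_def)
  have rpos: "real r > 0" using r3 by simp
  have "real n * th = real m * pi + pi * real t / real r"
  proof -
    have "real n * th = pi * real (n * s) / real r" by (simp add: th_def)
    also have "\<dots> = pi * (real m * real r + real t) / real r" by (simp add: ns)
    also have "\<dots> = real m * pi + pi * real t / real r" using rpos by (simp add: field_simps)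
    finally show ?thesis .
  qed
  thus "sin (real n * th) = (-1) ^ (n * s div r) * sin (pi * real (n * s mod r) / real r)"
    by (simp add: sin_add m_def t_def)
  have "t \<noteq> 0" using ndvd[OF assms] by (simp add: t_def dvd_eq_mod_eq_0)
  moreover have "t < r" using r3 by (simp add: t_def)
  ultimately show "sin (pi * real (n * s mod r) / real r) > 0"
    using rpos by (intro sin_gt_zero) (auto simp: t_def[symmetric] field_simps)
qed

lemma rsign_mult: "rsign (x * y) = rsign x * rsign y"
  by (auto simp: rsign_def mult_pos_neg mult_neg_pos zero_less_mult_iff mult_less_0_iff)
lemma rsign_div: "rsign (x / y) = rsign x * rsign y"
  by (auto simp: rsign_def zero_less_divide_iff divide_less_0_iff)
lemma rsign_pow: "rsign ((-1) ^ n) = (-1) ^ n"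
  by (induction n) (auto simp: rsign_mult rsign_def)
lemma rsign_pos: "x > 0 \<Longrightarrow> rsign x = 1" by (simp add: rsign_def)

lemma qr_sign: assumes "1 \<le> n" "n \<le> r - 1" shows "rsign (qr n) = sg n"
proof -
  have "rsign (qr n) = rsign ((-1) ^ (n * s div r)) * rsign (sin (pi * real (n * s mod r) / real r)) * rsign (sin th)"
    by (simp add: qr_def sin_sign(1)[OF assms] rsign_mult rsign_div)
  also have "\<dots> = sg n" using sin_sign(2)[OF assms] sin_th_pos by (simp add: rsign_pow rsign_pos sg_def)
  finally show ?thesis .
qed

lemma eps_sg: assumes "1 \<le> n" "n \<le> r - 1" shows "eps r s n = sg n"
  using assms by (simp add: eps_def qint_real qr_sign)

lemma eps_0[simp]: "eps r s 0 = 0" by (simp add: eps_def)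

lemma sg_sq[simp]: "sg n * sg n = 1" "sg n * (sg n * z) = z"
  by (simp_all add: sg_def flip: power_add mult.assoc)

end

context VQ begin

definition QF :: "nat \<Rightarrow> real" where "QF m = (\<Prod>l\<in>{1..m}. qr l)"
definition FF :: "nat \<Rightarrow> int" where "FF m = (\<Prod>l\<in>{1..m}. sg l)"

lemma FF_0[simp]: "FF 0 = 1" by (simp add: FF_def)
lemma FF_Suc: "FF (Suc m) = FF m * sg (Suc m)" by (simp add: FF_def prod.cl_ivl_Suc)
lemma FF_sq[simp]: "FF m * FF m = 1" "FF m * (FF m * z) = z"
proof -
  show "FF m * FF m = 1" by (induction m) (simp_all add: FF_Suc algebra_simps)
  thus "FF m * (FF m * z) = z" by (simp flip: mult.assoc)
qed

lemma m1_sq[simp]: "(-1::int)^n * (-1)^n = 1" "(-1::int)^n * ((-1)^n * z) = z"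
  by (simp_all flip: power_add mult.assoc)

lemma qfact_real: "qfact r s m = complex_of_real (QF m)"
  by (simp add: qfact_def QF_def qint_real)

lemma QF_sign: "m \<le> r - 1 \<Longrightarrow> rsign (QF m) = FF m"
proof (induction m)
  case 0 thus ?case by (simp add: QF_def rsign_def)
next
  case (Suc m)
  have "QF (Suc m) = QF m * qr (Suc m)" by (simp add: QF_def prod.cl_ivl_Suc)
  thus ?case using Suc by (simp add: rsign_mult qr_sign FF_Suc)
qed

definition GG :: "nat \<Rightarrow> nat \<Rightarrow> nat \<Rightarrow> int" where
  "GG a b c = (-1)^c * FF (a+b+1) * FF (a+b+c+1) * FF a * FF b * FF c * FF (b+c) * FF (a+c)"

definition Nt :: "nat \<Rightarrow> nat \<Rightarrow> nat \<Rightarrow> int" where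
  "Nt i j k = (if admissible r i j k then GG ((j+k-i) div 2) ((i+k-j) div 2) ((i+j-k) div 2) else 0)"

lemma eta_sg: "k \<le> r - 2 \<Longrightarrow> eta r s k = (-1)^k * of_int (sg (k+1))"
  using r3 by (simp add: eta_def eps_sg)

lemma sg_pm: "sg n = 1 \<or> sg n = -1" by (simp add: sg_def minus_one_power_iff)

lemma omega_eta: assumes "k \<le> r - 2"
  shows "omega r s i j k / eta r s k = of_int (Nt i j k)"
proof (cases "admissible r i j k")
  case False thus ?thesis by (simp add: omega_def Nt_def)
next
  case True
  define a where "a = (j + k - i) div 2"
  define b where "b = (i + k - j) div 2"
  define c where "c = (i + j - k) div 2"
  have adm: "i \<le> j + k" "j \<le> i + k" "k \<le> i + j" "even (i+j+k)" "i+j+k \<le> 2*r-4"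
    using True by (auto simp: admissible_def)
  have "even (j+k-i)" "even (i+k-j)" "even (i+j-k)" using adm by (simp_all add: even_diff_nat add_ac)
  hence ea: "2 * a = j+k-i" "2 * b = i+k-j" "2 * c = i+j-k" by (simp_all add: a_def b_def c_def)
  have kab: "k = a + b" using ea adm by linarith
  have S: "a+b+c+1 \<le> r - 1" using ea adm r3 by linarith
  have tri: "tri r s i j k = complex_of_real ((-1) ^ (a+b+c) * QF (a+b+c+1) * QF a * QF b * QF c
       / (QF (a+b) * QF (a+c) * QF (b+c)))"
    by (simp add: tri_def Let_def a_def[symmetric] b_def[symmetric] c_def[symmetric] qfact_real)
  have W: "rsign (Re (tri r s i j k)) = (-1) ^ (a+b+c) * FF (a+b+c+1) * FF a * FF b * FF c
       * FF (a+b) * FF (a+c) * FF (b+c)"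
    unfolding tri using S by (simp add: rsign_mult rsign_div rsign_pow QF_sign)
  have "omega r s i j k / eta r s k = of_int (rsign (Re (tri r s i j k))) / ((-1)^k * of_int (sg (k+1)))"
    using True assms by (simp add: omega_def eta_sg)
  also have "\<dots> = of_int (rsign (Re (tri r s i j k)) * (-1)^k * sg (k+1))"
    using sg_pm[of "k+1"] by (auto simp: minus_one_power_iff)
  also have "rsign (Re (tri r s i j k)) * (-1)^k * sg (k+1) = GG a b c"
    unfolding W unfolding GG_def kab by (simp add: FF_Suc power_add algebra_simps)
  finally show ?thesis using True by (simp add: Nt_def a_def b_def c_def)
qed

end

lemma key_pm:
  fixes x1 x2 y1 y2 z1 z2 :: int
  assumes "x1 = 1 \<or> x1 = -1" "x2 = 1 \<or> x2 = -1" "y1 = 1 \<or> y1 = -1" "y2 = 1 \<or> y2 = -1"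
    "z1 = 1 \<or> z1 = -1" "z2 = 1 \<or> z2 = -1"
    and "y1 * y2 = z1 * z2 \<Longrightarrow> x1 * x2 = y1 * y2"
  shows "x1 * y1 * y2 * z2 * x2 = z2 + y1 * z1 * y2 - x2 * x1 * z1"
  using assms by auto

context VQ begin

lemma sg_pow: "sg n = (-1) ^ (n * s div r)" by (simp add: sg_def)

lemma carry:
  assumes "sg (u+v+w) * sg v = sg u * sg w"
  shows "sg (u+v) * sg (v+w) = sg (u+v+w) * sg v"
proof -
  define U where "U = u * s div r"
  define V where "V = v * s div r"
  define W where "W = w * s div r"
  define p where "p = u * s mod r"
  define q where "q = v * s mod r"
  define t where "t = w * s mod r"
  have rp: "0 < r" using r3 by simp
  have pr: "p < r" "q < r" "t < r" using rp by (simp_all add: p_def q_def t_def)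
  have du: "u * s = U * r + p" "v * s = V * r + q" "w * s = W * r + t"
    by (simp_all add: U_def V_def W_def p_def q_def t_def)
  have d12: "(u+v) * s div r = U + V + (p+q) div r"
  proof -
    have "(u+v)*s = (U+V)*r + (p+q)" using du by (simp add: algebra_simps)
    thus ?thesis using rp by simp
  qed
  have d23: "(v+w) * s div r = V + W + (q+t) div r"
  proof -
    have "(v+w)*s = (V+W)*r + (q+t)" using du by (simp add: algebra_simps)
    thus ?thesis using rp by simp
  qed
  have d123: "(u+v+w) * s div r = U + V + W + (p+q+t) div r"
  proof -
    have "(u+v+w)*s = (U+V+W)*r + (p+q+t)" using du by (simp add: algebra_simps)
    thus ?thesis using rp by simp
  qed
  have c1: "(p+q) div r = (if r \<le> p+q then 1 else 0)"
    using pr by (auto simp: div_nat_eqI)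
  have c2: "(q+t) div r = (if r \<le> q+t then 1 else 0)"
    using pr by (auto simp: div_nat_eqI)
  have c3: "(p+q+t) div r = (if p+q+t < r then 0 else if p+q+t < 2*r then 1 else 2)"
    using pr by (auto simp: div_nat_eqI)
  have H: "even (U+V+W + (p+q+t) div r + V) = even (U + W)"
    using assms by (simp add: sg_def d123 U_def[symmetric] V_def[symmetric] W_def[symmetric]
        flip: power_add) (simp add: minus_one_power_iff split: if_splits)
  have "even (U + V + (p+q) div r + (V + W + (q+t) div r)) = even (U + V + W + (p+q+t) div r + V)"
    using H unfolding c1 c2 c3 using pr by (auto split: if_splits)
  thus ?thesis
    by (simp add: sg_def d12 d23 d123 U_def[symmetric] V_def[symmetric] W_def[symmetric]
        flip: power_add) (simp add: minus_one_power_iff split: if_splits)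
qed

lemma sg_sym: assumes "1 \<le> n" "n \<le> r - 1" shows "sg (r - n) = sg n"
proof -
  define m where "m = n * s div r"
  define t where "t = n * s mod r"
  have t0: "t \<noteq> 0" using ndvd[OF assms] by (simp add: t_def dvd_eq_mod_eq_0)
  have tr: "t < r" using r3 by (simp add: t_def)
  have ns: "n * s = m * r + t" by (simp add: m_def t_def)
  have ms: "m < s"
  proof -
    have "n * s < s * r" using assms s_pos r3 by simp
    thus ?thesis unfolding m_def by (rule less_mult_imp_div_less)
  qed
  obtain d where d: "s = m + 1 + d" using ms by (metis add_Suc less_imp_Suc_add Suc_eq_plus1)
  have nr: "n \<le> r" using assms by simp
  have "int ((r - n) * s) = int r * int s - int n * int s" using nr by (simp add: of_nat_diff algebra_simps)
  also have "int n * int s = int m * int r + int t" using arg_cong[OF ns, of int] by simp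
  also have "int r * int s - (int m * int r + int t) = int (d * r + (r - t))"
    using tr by (simp add: d of_nat_diff algebra_simps)
  finally have "(r - n) * s = d * r + (r - t)" by (simp only: of_nat_eq_iff)
  hence "(r - n) * s div r = d" using t0 tr by (simp only:) (rule div_nat_eqI; simp only: mult_Suc_right mult.commute[of r d]; linarith)
  moreover have "even d = even m" using s_odd d by simp
  ultimately show ?thesis by (simp add: sg_def m_def[symmetric] minus_one_power_iff)
qed

lemmas FFS = FF_Suc

lemma G1: "GG 0 (b+1) c * sg (b+1) * sg (b+2) = GG 0 b c * sg (b+c+1) * sg (b+c+2)"
  by (simp add: GG_def FF_Suc algebra_simps)

lemma G2: "GG a 0 (c+1) = - sg (a+1) * sg (a+2) * GG (a+1) 0 c"
  by (simp add: GG_def FF_Suc algebra_simps)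

lemma G3: "GG a (b+1) 0 = GG a b 0"
  by (simp add: GG_def FF_Suc algebra_simps)


lemma G4: "GG a (b+1) (c+1) = GG a b (c+1) - sg (a+b+2) * sg (a+b+2+1) * GG (a+1) (b+1) c
    + sg (b+c+1) * sg (b+c+2) * GG (a+1) b c"
proof -
  define P where "P = (-1)^c * FF (a+b+1) * FF (a+b+c+2) * FF a * FF b * FF c * FF (b+c) * FF (a+c+1)"
  have e0: "GG a (b+1) (c+1) = - P * sg (b+c+1) * (sg (a+b+2) * sg (a+b+c+2+1) * sg (b+1) * sg (c+1) * sg (b+c+2))"
    by (simp add: GG_def P_def FF_Suc algebra_simps)
  have e1: "GG a b (c+1) = - P * sg (b+c+1) * sg (c+1)"
    by (simp add: GG_def P_def FF_Suc algebra_simps)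
  have e2: "sg (a+b+2) * sg (a+b+2+1) * GG (a+1) (b+1) c = P * sg (b+c+1) * (sg (a+b+c+2+1) * sg (a+1) * sg (b+1))"
    by (simp add: GG_def P_def FF_Suc algebra_simps)
  have e3: "sg (b+c+1) * sg (b+c+2) * GG (a+1) b c = - P * sg (b+c+1) * (- sg (b+c+2) * sg (a+b+2) * sg (a+1))"
    by (simp add: GG_def P_def FF_Suc algebra_simps)
  have C: "sg (a+b+c+2+1) * sg (b+1) = sg (a+1) * sg (c+1) \<Longrightarrow> sg (a+b+2) * sg (b+c+2) = sg (a+b+c+2+1) * sg (b+1)"
    using carry[of "a+1" "b+1" "c+1"] by (simp add: ac_simps)
  have K: "sg (a+b+2) * sg (a+b+c+2+1) * sg (b+1) * sg (c+1) * sg (b+c+2)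
      = sg (c+1) + sg (a+b+c+2+1) * sg (a+1) * sg (b+1) - sg (b+c+2) * sg (a+b+2) * sg (a+1)"
    by (rule key_pm[OF sg_pm sg_pm sg_pm sg_pm sg_pm sg_pm C])
  show ?thesis unfolding e0 e1 e2 e3 K by (simp add: algebra_simps)
qed

lemma G5: assumes "a+b+c+2+1 = r"
  shows "GG a b (c+1) + sg (b+c+1) * sg (b+c+2) * GG (a+1) b c = 0"
proof -
  define P where "P = (-1)^c * FF (a+b+1) * FF (a+b+c+2) * FF a * FF b * FF c * FF (b+c) * FF (a+c+1)"
  have e1: "GG a b (c+1) = - P * sg (b+c+1) * sg (c+1)"
    by (simp add: GG_def P_def FF_Suc algebra_simps)
  have e3: "sg (b+c+1) * sg (b+c+2) * GG (a+1) b c = P * sg (b+c+1) * (sg (b+c+2) * sg (a+b+2) * sg (a+1))"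
    by (simp add: GG_def P_def FF_Suc algebra_simps)
  have "b+c+2 = r - (a+1)" using assms by simp
  hence s1: "sg (b+c+2) = sg (a+1)" using sg_sym[of "a+1"] assms by simp
  have "a+b+2 = r - (c+1)" using assms by simp
  hence s2: "sg (a+b+2) = sg (c+1)" using sg_sym[of "c+1"] assms by simp
  show ?thesis unfolding e1 e3 unfolding s1 s2 by (simp add: algebra_simps)
qed

end

context VQ begin

definition Nz :: "int \<Rightarrow> int \<Rightarrow> int \<Rightarrow> int" where
  "Nz a b c = (if 0 \<le> a \<and> 0 \<le> b \<and> 0 \<le> c \<and> a+b+c \<le> int r - 2 then GG (nat a) (nat b) (nat c) else 0)"

lemma Nz_nat: "Nz (int a) (int b) (int c) = (if a + b + c \<le> r - 2 then GG a b c else 0)"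
  using r3 by (auto simp: Nz_def)

lemma Nz_eq: "a' = int a \<Longrightarrow> b' = int b \<Longrightarrow> c' = int c \<Longrightarrow> Nz a' b' c' = (if a + b + c \<le> r - 2 then GG a b c else 0)"
  using Nz_nat by simp

lemma rec_int:
  assumes h: "0 \<le> A+B" "0 \<le> A+C" "1 \<le> B+C" "B+C \<le> int r - 2" "A+C \<le> int r - 2" "A+B \<le> int r - 2"
  shows "Nz A B C = (if 1 \<le> A+B then Nz A (B-1) C else 0)
   - (if A+B+1 \<le> int r - 2 then sg (nat (A+B+1)) * sg (nat (A+B+2)) * Nz (A+1) B (C-1) else 0)
   + (if 2 \<le> B+C then sg (nat (B+C-1)) * sg (nat (B+C)) * Nz (A+1) (B-1) (C-1) else 0)"
proof -
  consider "B < 0 \<or> C < 0 \<or> A < -1" | "A = -1" "B \<ge> 1" "C \<ge> 1" | "A \<ge> 0" "B = 0" "C \<ge> 1"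
    | "A \<ge> 0" "B \<ge> 1" "C = 0" | "A \<ge> 0" "B \<ge> 1" "C \<ge> 1" using h by linarith
  thus ?thesis
  proof cases
    case 1 thus ?thesis by (auto simp: Nz_def)
  next
    case 2
    obtain b c where bc: "B = int b + 1" "C = int c + 1" using 2
      by (metis add.commute nonneg_int_cases zle_iff_zadd)
    have "GG 0 (b+1) c * sg (b+1) * sg (b+2) = GG 0 b c * sg (b+c+1) * sg (b+c+2)" by (rule G1)
    moreover have "Nz 0 B (C-1) = GG 0 (b+1) c" using h 2 bc
      by (subst Nz_eq[where a=0 and b="b+1" and c=c]) auto
    moreover have "Nz 0 (B-1) (C-1) = GG 0 b c" using h 2 bc
      using Nz_nat[of 0 b c] by simp
    moreover have "nat (A+B+1) = b+1" "nat (A+B+2) = b+2" "nat (B+C-1) = b+c+1" "nat (B+C) = b+c+2"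
      using 2 bc by auto
    ultimately show ?thesis using h 2 bc by (simp add: Nz_def algebra_simps)
  next
    case 3
    obtain a c where ac: "A = int a" "C = int c + 1" using 3
      by (metis add.commute nonneg_int_cases zle_iff_zadd)
    have "Nz A B C = GG a 0 (c+1)" using h 3 ac by (subst Nz_eq[where a=a and b=0 and c="c+1"]) auto
    moreover have "Nz (A+1) B (C-1) = GG (a+1) 0 c" using h 3 ac by (subst Nz_eq[where a="a+1" and b=0 and c=c]) auto
    moreover have "nat (A+B+1) = a+1" "nat (A+B+2) = a+2" using 3 ac by auto
    ultimately show ?thesis using h 3 ac G2[of a c] by (simp add: Nz_def algebra_simps)
  next
    case 4
    obtain a b where ab: "A = int a" "B = int b + 1" using 4
      by (metis add.commute nonneg_int_cases zle_iff_zadd)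
    have "Nz A B C = GG a (b+1) 0" using h 4 ab by (subst Nz_eq[where a=a and b="b+1" and c=0]) auto
    moreover have "Nz A (B-1) C = GG a b 0" using h 4 ab by (subst Nz_eq[where a=a and b=b and c=0]) auto
    ultimately show ?thesis using h 4 ab G3[of a b] by (simp add: Nz_def algebra_simps)
  next
    case 5
    obtain a b c where abc: "A = int a" "B = int b + 1" "C = int c + 1" using 5
      by (metis add.commute nonneg_int_cases zle_iff_zadd)
    have co: "nat (A+B+1) = a+b+2" "nat (A+B+2) = a+b+2+1" "nat (B+C-1) = b+c+1" "nat (B+C) = b+c+2"
      using 5 abc by auto
    consider "a+b+c+2 \<le> r - 2" | "a+b+c+2+1 = r" | "a+b+c+2 \<ge> r" by linarith
    thus ?thesis
    proof cases
      case 1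
      have "Nz A B C = GG a (b+1) (c+1)" using abc 1 by (subst Nz_eq[where a=a and b="b+1" and c="c+1"]) auto
      moreover have "Nz A (B-1) C = GG a b (c+1)" using abc 1 by (subst Nz_eq[where a=a and b=b and c="c+1"]) auto
      moreover have "Nz (A+1) B (C-1) = GG (a+1) (b+1) c" using abc 1 by (subst Nz_eq[where a="a+1" and b="b+1" and c=c]) auto
      moreover have "Nz (A+1) (B-1) (C-1) = GG (a+1) b c" using abc 1 by (subst Nz_eq[where a="a+1" and b=b and c=c]) auto
      moreover have "A+B+1 \<le> int r - 2" "1 \<le> A+B" "2 \<le> B+C" using abc 1 by auto
      ultimately show ?thesis unfolding co using G4[of a b c] by simp
    next
      case 2
      have "Nz A B C = 0" using abc 2 by (simp add: Nz_def)
      moreover have "Nz A (B-1) C = GG a b (c+1)" using abc 2 by (subst Nz_eq[where a=a and b=b and c="c+1"]) auto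
      moreover have "Nz (A+1) B (C-1) = 0" using abc 2 by (simp add: Nz_def)
      moreover have "Nz (A+1) (B-1) (C-1) = GG (a+1) b c" using abc 2 by (subst Nz_eq[where a="a+1" and b=b and c=c]) auto
      moreover have "1 \<le> A+B" "2 \<le> B+C" using abc 2 by auto
      ultimately show ?thesis unfolding co using G5[OF 2] by simp
    next
      case 3
      thus ?thesis using abc by (simp add: Nz_def)
    qed
  qed
qed

lemma Nt_odd: "odd (i+j+k) \<Longrightarrow> Nt i j k = 0" by (simp add: Nt_def admissible_def)

lemma half: "even (i+j+k) \<Longrightarrow> 2 * ((int j + int k - int i) div 2) = int j + int k - int i"
  by (rule dvd_mult_div_cancel) (simp add: even_add, argo)

lemma div2_eq: "x = 2 * a \<Longrightarrow> x div 2 = (a::int)" by simp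

lemma Nt_Nz: assumes ev: "even (i+j+k)"
  shows "Nt i j k = Nz ((int j + int k - int i) div 2) ((int i + int k - int j) div 2) ((int i + int j - int k) div 2)"
proof -
  define A where "A = (int j + int k - int i) div 2"
  define B where "B = (int i + int k - int j) div 2"
  define C where "C = (int i + int j - int k) div 2"
  have hA: "2 * A = int j + int k - int i" unfolding A_def by (rule half[OF ev])
  have "even (j+i+k)" "even (k+i+j)" using ev by (simp_all only: ac_simps)
  hence hB: "2 * B = int i + int k - int j" and hC: "2 * C = int i + int j - int k"
    unfolding B_def C_def by (simp_all only: half)
  show ?thesis
  proof (cases "admissible r i j k")
    case True
    hence t: "i \<le> j + k" "j \<le> i + k" "k \<le> i + j" "i+j+k \<le> 2*r-4" by (auto simp: admissible_def)
    have e1: "A = int ((j+k-i) div 2)" using t hA by (simp add: zdiv_int of_nat_diff A_def)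
    have e2: "B = int ((i+k-j) div 2)" using t by (simp add: zdiv_int of_nat_diff B_def)
    have e3: "C = int ((i+j-k) div 2)" using t by (simp add: zdiv_int of_nat_diff C_def)
    have "A + B + C \<le> int r - 2" using hA hB hC t r3 by linarith
    hence "(j+k-i) div 2 + (i+k-j) div 2 + (i+j-k) div 2 \<le> r - 2" using e1 e2 e3 r3 by linarith
    thus ?thesis using True unfolding A_def[symmetric] B_def[symmetric] C_def[symmetric] e1 e2 e3 Nz_nat
      by (simp add: Nt_def)
  next
    case False
    hence "\<not> (i \<le> j + k \<and> j \<le> i + k \<and> k \<le> i + j \<and> i+j+k \<le> 2*r-4)"
      using ev r3 by (auto simp: admissible_def)
    hence "\<not> (0 \<le> A \<and> 0 \<le> B \<and> 0 \<le> C \<and> A + B + C \<le> int r - 2)"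
      using hA hB hC r3 by linarith
    thus ?thesis using False unfolding A_def[symmetric] B_def[symmetric] C_def[symmetric]
      by (auto simp: Nt_def Nz_def)
  qed
qed

lemma rec_nat:
  assumes h: "i+1 \<le> r-2" "j \<le> r-2" "k \<le> r-2"
  shows "Nt (i+1) j k = (if 1 \<le> k then Nt i j (k-1) else 0)
     - (if k+1 \<le> r-2 then sg (k+1) * sg (k+2) * Nt i j (k+1) else 0)
     + eps r s i * eps r s (i+1) * Nt (i-1) j k"
proof (cases "even (i+1+j+k)")
  case False
  have "Nt (i+1) j k = 0" using False by (simp add: Nt_odd)
  moreover have "1 \<le> k \<Longrightarrow> Nt i j (k-1) = 0" using False by (intro Nt_odd) (simp add: even_add)
  moreover have "Nt i j (k+1) = 0" using False by (intro Nt_odd) (simp add: even_add)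
  moreover have "eps r s i * Nt (i-1) j k = 0"
    using False by (cases i) (auto intro!: Nt_odd simp: even_add)
  ultimately show ?thesis by (simp add: mult.assoc mult.left_commute[of "eps r s i"])
next
  case True
  define A where "A = (int j + int k - int (i+1)) div 2"
  define B where "B = (int (i+1) + int k - int j) div 2"
  define C where "C = (int (i+1) + int j - int k) div 2"
  have hA: "2 * A = int j + int k - int (i+1)" unfolding A_def by (rule half[OF True])
  have "even (j+(i+1)+k)" "even (k+(i+1)+j)" using True by (simp_all only: ac_simps)
  hence hB: "2 * B = int (i+1) + int k - int j" and hC: "2 * C = int (i+1) + int j - int k"
    unfolding B_def C_def by (simp_all only: half)
  have AB: "A + B = int k" and AC: "A + C = int j" and BC: "B + C = int i + 1"
    using hA hB hC by simp_all
  have L: "Nt (i+1) j k = Nz A B C" using True by (simp add: Nt_Nz A_def B_def C_def)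
  have T1: "1 \<le> k \<Longrightarrow> Nt i j (k-1) = Nz A (B-1) C"
  proof -
    assume k: "1 \<le> k"
    have "even (i+j+(k-1))" using True k by (simp add: even_add)
    moreover have "(int j + int (k-1) - int i) div 2 = A" "(int i + int (k-1) - int j) div 2 = B - 1"
      "(int i + int j - int (k-1)) div 2 = C" using k hA hB hC by (simp_all add: of_nat_diff div2_eq)
    ultimately show ?thesis using Nt_Nz by metis
  qed
  have T2: "Nt i j (k+1) = Nz (A+1) B (C-1)"
  proof -
    have "even (i+j+(k+1))" using True by (simp add: even_add)
    moreover have "(int j + int (k+1) - int i) div 2 = A+1" "(int i + int (k+1) - int j) div 2 = B"
      "(int i + int j - int (k+1)) div 2 = C-1" using hA hB hC by (simp_all add: div2_eq)
    ultimately show ?thesis using Nt_Nz by metis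
  qed
  have T3: "1 \<le> i \<Longrightarrow> Nt (i-1) j k = Nz (A+1) (B-1) (C-1)"
  proof -
    assume i: "1 \<le> i"
    have "even ((i-1)+j+k)" using True i by (simp add: even_add)
    moreover have "(int j + int k - int (i-1)) div 2 = A+1" "(int (i-1) + int k - int j) div 2 = B-1"
      "(int (i-1) + int j - int k) div 2 = C-1" using i hA hB hC by (simp_all add: of_nat_diff div2_eq)
    ultimately show ?thesis using Nt_Nz by metis
  qed
  have R: "Nz A B C = (if 1 \<le> A+B then Nz A (B-1) C else 0)
   - (if A+B+1 \<le> int r - 2 then sg (nat (A+B+1)) * sg (nat (A+B+2)) * Nz (A+1) B (C-1) else 0)
   + (if 2 \<le> B+C then sg (nat (B+C-1)) * sg (nat (B+C)) * Nz (A+1) (B-1) (C-1) else 0)"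
    using h r3 by (intro rec_int) (simp_all add: AB AC BC)
  have E: "eps r s i * eps r s (i+1) = (if 1 \<le> i then sg i * sg (i+1) else 0)"
    using h r3 by (cases "i = 0") (auto simp: eps_sg)
  have n1: "nat (A+B+1) = k+1" "nat (A+B+2) = k+2" "nat (B+C-1) = i" "nat (B+C) = i+1"
    by (simp_all add: AB BC nat_int_add)
  show ?thesis unfolding L R E n1 using T1 T2 T3 h r3 by (auto simp: AB BC)
qed

end

context VQ begin

abbreviation Nq :: "nat \<Rightarrow> nat \<Rightarrow> nat \<Rightarrow> rat" where "Nq i j k \<equiv> rat_of_int (Nt i j k)"
abbreviation Lm :: "(nat \<Rightarrow> rat) \<Rightarrow> nat \<Rightarrow> rat" where "Lm \<equiv> vmult r s (ebas r (Suc 0))"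

lemma vmult_alt: "vmult r s x y k = (if k \<le> r-2 then (\<Sum>i\<le>r-2. \<Sum>j\<le>r-2. x i * y j * Nq i j k) else 0)"
proof (cases "k \<le> r - 2")
  case True
  have "(\<Sum>i\<le>r-2. \<Sum>j\<le>r-2. x i * y j * omega r s i j k) / eta r s k
      = (\<Sum>i\<le>r-2. \<Sum>j\<le>r-2. x i * y j * (omega r s i j k / eta r s k))"
    by (simp add: sum_divide_distrib)
  thus ?thesis using True by (simp add: vmult_def omega_eta)
qed (simp add: vmult_def)

lemma vmult_ebas: assumes "i \<le> r - 2"
  shows "vmult r s (ebas r i) y k = (if k \<le> r-2 then (\<Sum>j\<le>r-2. y j * Nq i j k) else 0)"
proof -
  have "(\<Sum>i'\<le>r-2. \<Sum>j\<le>r-2. ebas r i i' * y j * Nq i' j k) = (\<Sum>i'\<le>r-2. if i' = i then (\<Sum>j\<le>r-2. y j * Nq i j k) else 0)"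
    by (rule sum.cong) (auto simp: ebas_def assms)
  also have "\<dots> = (\<Sum>j\<le>r-2. y j * Nq i j k)" using assms by (simp add: sum.delta)
  finally show ?thesis by (simp add: vmult_alt)
qed

lemma GG_00: "GG j 0 0 = 1" by (simp add: GG_def)
lemma GG_0n0: "GG 0 n 0 = 1" by (simp add: GG_def)

lemma Nt_0: "Nt 0 j k = (if j = k \<and> j \<le> r - 2 then 1 else 0)"
proof (cases "j = k \<and> j \<le> r - 2")
  case True
  hence "admissible r 0 j k" using r3 by (auto simp: admissible_def)
  thus ?thesis using True by (simp add: Nt_def GG_00)
next
  case False
  hence "\<not> admissible r 0 j k" by (auto simp: admissible_def)
  thus ?thesis using False by (simp add: Nt_def)
qed

lemma Nt_n0: "Nt n 0 k = (if k = n \<and> n \<le> r - 2 then 1 else 0)"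
proof (cases "k = n \<and> n \<le> r - 2")
  case True
  hence "admissible r n 0 k" using r3 by (auto simp: admissible_def)
  thus ?thesis using True by (simp add: Nt_def GG_0n0)
next
  case False
  hence "\<not> admissible r n 0 k" by (auto simp: admissible_def)
  thus ?thesis using False by (simp add: Nt_def)
qed

lemma Nt_1: "Nt (Suc 0) l k = (if k = l+1 \<and> l+1 \<le> r-2 then 1 else 0)
   - (if 1 \<le> l \<and> k+1 = l \<and> l \<le> r-2 then sg l * sg (l+1) else 0)"
proof -
  consider "k = l + 1" | "1 \<le> l" "k + 1 = l" | "k \<noteq> l + 1" "k + 1 \<noteq> l" by linarith
  thus ?thesis
  proof cases
    case 1
    have "admissible r 1 l k = (l+1 \<le> r - 2)" using 1 r3 by (auto simp: admissible_def)
    moreover have "(l+k-1) div 2 = l" "(1+k-l) div 2 = 1" "(1+l-k) div 2 = 0" using 1 by auto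
    moreover have "GG l 1 0 = 1" by (simp add: GG_def FF_Suc algebra_simps)
    ultimately show ?thesis using 1 by (simp add: Nt_def)
  next
    case 2
    obtain m where m: "l = m + 1" using 2 by (metis add.commute le_Suc_ex)
    have "admissible r 1 l k = (l \<le> r - 2)" using 2 r3 by (auto simp: admissible_def)
    moreover have "(l+k-1) div 2 = m" "(1+k-l) div 2 = 0" "(1+l-k) div 2 = 1" using 2 m by auto
    moreover have "GG m 0 1 = - sg (m+1) * sg (m+2)" by (simp add: GG_def FF_Suc algebra_simps)
    ultimately show ?thesis using 2 m by (simp add: Nt_def)
  next
    case 3
    hence "\<not> admissible r 1 l k" by (cases "k = l") (auto simp: admissible_def)
    thus ?thesis using 3 by (simp add: Nt_def)
  qed
qed

lemma Nq_1: assumes "k \<le> r - 2" "j \<le> r - 2"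
  shows "Nq (Suc 0) j k = (if 1 \<le> k then (if j = k - 1 then 1 else 0) else 0)
        - (if j = k + 1 then of_int (sg (k+1) * sg (k+2)) else 0)"
  using assms by (auto simp: Nt_1)

lemma Lm_formula: "Lm y k = (if k \<le> r-2 then (if 1 \<le> k then y (k-1) else 0)
    - (if k+1 \<le> r-2 then of_int (sg (k+1) * sg (k+2)) * y (k+1) else 0) else 0)"
proof (cases "k \<le> r - 2")
  case True
  have "(\<Sum>j\<le>r-2. y j * Nq (Suc 0) j k) = (\<Sum>j\<le>r-2. (if 1 \<le> k then (if j = k - 1 then y j else 0) else 0)
        - (if j = k + 1 then of_int (sg (k+1) * sg (k+2)) * y j else 0))"
    by (rule sum.cong) (auto simp: Nq_1 True)
  also have "\<dots> = (if 1 \<le> k then y (k-1) else 0)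
    - (if k+1 \<le> r-2 then of_int (sg (k+1) * sg (k+2)) * y (k+1) else 0)"
    using True by (auto simp: sum_subtractf sum.delta')
  finally show ?thesis using True r3 by (simp add: vmult_ebas)
qed (use r3 in \<open>simp add: vmult_ebas\<close>)

lemma Lm_lin: "Lm (\<lambda>k. \<Sum>i\<in>A. c i * f i k) = (\<lambda>k. \<Sum>i\<in>A. c i * Lm (f i) k)"
  by (rule ext) (simp add: Lm_formula sum_distrib_left sum_subtractf algebra_simps)

lemma Lm_zero: "Lm (\<lambda>k. 0) = (\<lambda>k. 0)"
  by (rule ext) (simp add: Lm_formula)

lemma Lm_Vq: "Lm y \<in> Vq r" by (simp add: Vq_def Lm_formula)

lemma claim1: assumes "n \<le> r - 2"
  shows "vmult r s (ebas r (Suc 0)) (ebas r n) =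
        vadd (if n = 0 then (\<lambda>_. 0)
              else vscale (- of_int (eps r s n * eps r s (n + 1))) (ebas r (n - 1)))
             (ebas r (n + 1))"
proof (rule ext)
  fix k
  have "Lm (ebas r n) k = (if k \<le> r-2 then (if 1 \<le> k then ebas r n (k-1) else 0)
    - (if k+1 \<le> r-2 then of_int (sg (k+1) * sg (k+2)) * ebas r n (k+1) else 0) else 0)"
    by (rule Lm_formula)
  also have "\<dots> = vadd (if n = 0 then (\<lambda>_. 0)
              else vscale (- of_int (eps r s n * eps r s (n + 1))) (ebas r (n - 1)))
             (ebas r (n + 1)) k"
    using assms r3 by (auto simp: vadd_def vscale_def ebas_def eps_sg)
  finally show "Lm (ebas r n) k = \<dots>" .
qed

end

context VQ begin

lemma M_rec: assumes "i + 1 \<le> r - 2"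
  shows "vmult r s (ebas r (i+1)) y = (\<lambda>k. Lm (vmult r s (ebas r i) y) k
          + of_int (eps r s i * eps r s (i+1)) * vmult r s (ebas r (i-1)) y k)"
proof (rule ext)
  fix k
  show "vmult r s (ebas r (i+1)) y k = Lm (vmult r s (ebas r i) y) k
          + of_int (eps r s i * eps r s (i+1)) * vmult r s (ebas r (i-1)) y k"
  proof (cases "k \<le> r - 2")
    case False thus ?thesis using assms by (simp add: vmult_ebas Lm_formula)
  next
    case True
    have per: "Nq (i+1) j k = (if 1 \<le> k then Nq i j (k-1) else 0)
      - (if k+1 \<le> r-2 then of_int (sg (k+1) * sg (k+2)) * Nq i j (k+1) else 0)
      + of_int (eps r s i * eps r s (i+1)) * Nq (i-1) j k" if "j \<le> r - 2" for j
      using rec_nat[OF assms that True] by simp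
    have "vmult r s (ebas r (i+1)) y k = (\<Sum>j\<le>r-2. y j * Nq (i+1) j k)"
      using assms True by (simp add: vmult_ebas)
    also have "\<dots> = (\<Sum>j\<le>r-2. y j * ((if 1 \<le> k then Nq i j (k-1) else 0)
      - (if k+1 \<le> r-2 then of_int (sg (k+1) * sg (k+2)) * Nq i j (k+1) else 0)
      + of_int (eps r s i * eps r s (i+1)) * Nq (i-1) j k))"
    proof (rule sum.cong[OF refl])
      fix j assume "j \<in> {..r-2}"
      thus "y j * Nq (i+1) j k = y j * ((if 1 \<le> k then Nq i j (k-1) else 0)
      - (if k+1 \<le> r-2 then of_int (sg (k+1) * sg (k+2)) * Nq i j (k+1) else 0)
      + of_int (eps r s i * eps r s (i+1)) * Nq (i-1) j k)" using per[of j] by simp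
    qed
    also have "\<dots> = Lm (vmult r s (ebas r i) y) k
          + of_int (eps r s i * eps r s (i+1)) * vmult r s (ebas r (i-1)) y k"
      using assms True
      by (cases "1 \<le> k"; cases "k + 1 \<le> r - 2")
         (simp_all add: Lm_formula vmult_ebas sum_distrib_left sum.distrib sum_subtractf algebra_simps)
    finally show ?thesis .
  qed
qed

definition Lp :: "rat poly \<Rightarrow> (nat \<Rightarrow> rat) \<Rightarrow> nat \<Rightarrow> rat" where
  "Lp p y = (\<lambda>k. \<Sum>m\<le>degree p. coeff p m * (Lm ^^ m) y k)"

lemma veval_Lp: "veval r s p (ebas r (Suc 0)) = Lp p (ebas r 0)"
  by (simp add: veval_def vpow_def Lp_def)

lemma Lp_bound: assumes "degree p \<le> n"
  shows "Lp p y = (\<lambda>k. \<Sum>m\<le>n. coeff p m * (Lm ^^ m) y k)"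
proof (rule ext)
  fix k
  show "Lp p y k = (\<Sum>m\<le>n. coeff p m * (Lm ^^ m) y k)"
    unfolding Lp_def
    by (rule sum.mono_neutral_left) (use assms in \<open>auto simp: coeff_eq_0\<close>)
qed

lemma Lp_0[simp]: "Lp 0 y = (\<lambda>k. 0)" by (simp add: Lp_def)

lemma Lp_pCons: "Lp (pCons a p) y = (\<lambda>k. a * y k + Lm (Lp p y) k)"
proof -
  have "Lp (pCons a p) y = (\<lambda>k. \<Sum>m\<le>Suc (degree p). coeff (pCons a p) m * (Lm ^^ m) y k)"
    by (rule Lp_bound) (simp add: degree_pCons_le)
  also have "\<dots> = (\<lambda>k. a * y k + (\<Sum>m\<le>degree p. coeff p m * Lm ((Lm ^^ m) y) k))"
    by (rule ext) (simp only: sum.atMost_Suc_shift coeff_pCons_0 coeff_pCons_Suc funpow.simps comp_apply id_apply)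
  also have "\<dots> = (\<lambda>k. a * y k + Lm (Lp p y) k)"
    by (simp add: Lp_def Lm_lin)
  finally show ?thesis .
qed

lemma Lp_add: "Lp (p + q) y = (\<lambda>k. Lp p y k + Lp q y k)"
proof -
  define n where "n = degree p + degree q"
  have "degree (p + q) \<le> n" "degree p \<le> n" "degree q \<le> n"
    by (auto simp: n_def intro: order.trans[OF degree_add_le_max])
  thus ?thesis by (simp add: Lp_bound[of _ n] algebra_simps sum.distrib)
qed

lemma Lp_smult: "Lp (Polynomial.smult c p) y = (\<lambda>k. c * Lp p y k)"
  by (simp add: Lp_bound[of _ "degree p"] sum_distrib_left algebra_simps)

lemma Lp_lin_y: "Lp p (\<lambda>k. \<Sum>i\<in>A. c i * f i k) = (\<lambda>k. \<Sum>i\<in>A. c i * Lp p (f i) k)"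
proof (induction p)
  case 0 show ?case by simp
next
  case (pCons a p)
  show ?case unfolding Lp_pCons pCons.IH Lm_lin
    by (simp add: algebra_simps sum.distrib sum_distrib_left)
qed

lemma Lp_zero_y: "Lp p (\<lambda>k. 0) = (\<lambda>k. 0)"
  using Lp_lin_y[where p=p and A="{}"] by simp

lemma Lp_mult: "Lp (p * q) y = Lp p (Lp q y)"
proof (induction p)
  case 0 show ?case by simp
next
  case (pCons a p)
  have "Lp (pCons a p * q) y = Lp (Polynomial.smult a q + pCons 0 (p * q)) y" by simp
  also have "\<dots> = (\<lambda>k. a * Lp q y k + Lm (Lp p (Lp q y)) k)"
    by (simp add: Lp_add Lp_smult Lp_pCons pCons.IH)
  also have "\<dots> = Lp (pCons a p) (Lp q y)" by (simp add: Lp_pCons)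
  finally show ?case .
qed

lemma Lp_1: "Lp 1 y = y"
  by (simp add: one_pCons Lp_pCons Lm_zero)

lemma Lp_X: "Lp [:0, 1:] y = Lm y"
  by (simp add: Lp_pCons Lp_1[unfolded one_pCons] Lm_zero)

lemma Lpow_Vq: "y \<in> Vq r \<Longrightarrow> (Lm ^^ m) y \<in> Vq r"
  by (induction m) (simp_all add: Lm_Vq)

lemma Lp_Vq: "y \<in> Vq r \<Longrightarrow> Lp p y \<in> Vq r"
  using Lpow_Vq by (auto simp: Vq_def Lp_def)

end

context VQ begin

definition Q :: "nat \<Rightarrow> rat poly" where "Q n = map_poly rat_of_int (Ppoly r s n)"

lemma Q_0: "Q 0 = 1" by (simp add: Q_def)
lemma Q_1: "Q (Suc 0) = [:0, 1:]" by (simp add: Q_def map_poly_pCons)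
lemma Q_rec: "Q (Suc (Suc n)) = [:0, 1:] * Q (Suc n)
   + Polynomial.smult (of_int (eps r s (Suc n) * eps r s (Suc (Suc n)))) (Q n)"
  by (intro poly_eqI) (simp add: Q_def coeff_map_poly coeff_pCons split: nat.split)

lemma Lp_Xmult: "Lp ([:0, 1:] * p) y = Lm (Lp p y)"
  by (simp only: Lp_mult Lp_X)

lemma M0: "y \<in> Vq r \<Longrightarrow> vmult r s (ebas r 0) y = y"
proof (rule ext)
  fix k assume y: "y \<in> Vq r"
  show "vmult r s (ebas r 0) y k = y k"
  proof (cases "k \<le> r - 2")
    case True
    have "(\<Sum>j\<le>r-2. y j * Nq 0 j k) = (\<Sum>j\<le>r-2. if j = k then y k else 0)"
      by (rule sum.cong) (auto simp: Nt_0)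
    thus ?thesis using True by (simp add: vmult_ebas)
  next
    case False thus ?thesis using y by (simp add: vmult_ebas Vq_def)
  qed
qed

lemma M_Lp2: assumes "y \<in> Vq r"
  shows "i + 1 \<le> r - 2 \<Longrightarrow> vmult r s (ebas r i) y = Lp (Q i) y \<and> vmult r s (ebas r (i+1)) y = Lp (Q (i+1)) y"
proof (induction i)
  case 0
  show ?case using assms by (simp add: M0 Q_0 Lp_1 Q_1 Lp_X)
next
  case (Suc i)
  hence IH: "vmult r s (ebas r i) y = Lp (Q i) y" "vmult r s (ebas r (i+1)) y = Lp (Q (i+1)) y" by auto
  have "vmult r s (ebas r ((i+1)+1)) y = (\<lambda>k. Lm (vmult r s (ebas r (i+1)) y) k
          + of_int (eps r s (i+1) * eps r s (i+1+1)) * vmult r s (ebas r (i+1-1)) y k)"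
    using Suc.prems by (intro M_rec) simp
  also have "\<dots> = Lp (Q (Suc (Suc i))) y"
    unfolding Q_rec Lp_add Lp_smult Lp_Xmult using IH by simp
  finally show ?case using IH by simp
qed

lemma M_Lp: assumes "y \<in> Vq r" "i \<le> r - 2"
  shows "vmult r s (ebas r i) y = Lp (Q i) y"
proof (cases "i + 1 \<le> r - 2")
  case True thus ?thesis using M_Lp2[OF assms(1)] by blast
next
  case False
  hence "i = (i - 1) + 1" "(i - 1) + 1 \<le> r - 2" using assms r3 by auto
  thus ?thesis using M_Lp2[OF assms(1), of "i-1"] by metis
qed

lemma ebas_Vq: "ebas r n \<in> Vq r" by (simp add: Vq_def ebas_def)

lemma ebas_Q: assumes "n \<le> r - 2" shows "Lp (Q n) (ebas r 0) = ebas r n"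
proof -
  have "vmult r s (ebas r n) (ebas r 0) = ebas r n"
  proof (rule ext)
    fix k
    have "(\<Sum>j\<le>r-2. ebas r 0 j * Nq n j k) = (\<Sum>j\<le>r-2. if j = 0 then Nq n 0 k else 0)"
      by (rule sum.cong) (auto simp: ebas_def)
    also have "\<dots> = Nq n 0 k" by simp
    finally have S: "(\<Sum>j\<le>r-2. ebas r 0 j * Nq n j k) = Nq n 0 k" .
    have "vmult r s (ebas r n) (ebas r 0) k = (if k \<le> r-2 then (\<Sum>j\<le>r-2. ebas r 0 j * Nq n j k) else 0)"
      by (rule vmult_ebas[OF assms])
    also have "\<dots> = (if k \<le> r-2 then Nq n 0 k else 0)" by (simp only: S)
    also have "\<dots> = ebas r n k" using assms by (simp add: Nt_n0 ebas_def)
    finally show "vmult r s (ebas r n) (ebas r 0) k = ebas r n k" .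
  qed
  thus ?thesis using M_Lp[OF ebas_Vq assms] by simp
qed

lemma Vq_expand: assumes "x \<in> Vq r" shows "x = (\<lambda>k. \<Sum>i\<le>r-2. x i * ebas r i k)"
proof (rule ext)
  fix k
  have "(\<Sum>i\<le>r-2. x i * ebas r i k) = (\<Sum>i\<le>r-2. if i = k then x k else 0)"
    by (rule sum.cong) (auto simp: ebas_def)
  also have "\<dots> = x k" using assms by (auto simp: Vq_def)
  finally show "x k = (\<Sum>i\<le>r-2. x i * ebas r i k)" by simp
qed

lemma vmult_first: "vmult r s u w = (\<lambda>k. \<Sum>i\<le>r-2. u i * vmult r s (ebas r i) w k)"
proof (rule ext)
  fix k
  have "(\<Sum>i\<le>r-2. u i * vmult r s (ebas r i) w k)
     = (\<Sum>i\<le>r-2. u i * (if k \<le> r-2 then (\<Sum>j\<le>r-2. w j * Nq i j k) else 0))"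
    by (rule sum.cong) (simp_all add: vmult_ebas)
  thus "vmult r s u w k = (\<Sum>i\<le>r-2. u i * vmult r s (ebas r i) w k)"
    by (simp add: vmult_alt[of u w] sum_distrib_left mult.assoc)
qed

lemma claim4: "Lp (p * q) (ebas r 0) = vmult r s (Lp p (ebas r 0)) (Lp q (ebas r 0))"
proof -
  define u where "u = Lp p (ebas r 0)"
  define w where "w = Lp q (ebas r 0)"
  have uV: "u \<in> Vq r" and wV: "w \<in> Vq r" using Lp_Vq ebas_Vq by (simp_all add: u_def w_def)
  have X: "vmult r s (ebas r i) w = Lp q (ebas r i)" if "i \<le> r - 2" for i
  proof -
    have "vmult r s (ebas r i) w = Lp (Q i) (Lp q (ebas r 0))" using M_Lp[OF wV that] by (simp add: w_def)
    also have "\<dots> = Lp (q * Q i) (ebas r 0)" by (simp add: Lp_mult[symmetric] mult.commute)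
    also have "\<dots> = Lp q (ebas r i)" by (simp add: Lp_mult ebas_Q that)
    finally show ?thesis .
  qed
  have "vmult r s u w = (\<lambda>k. \<Sum>i\<le>r-2. u i * vmult r s (ebas r i) w k)" by (rule vmult_first)
  also have "\<dots> = (\<lambda>k. \<Sum>i\<le>r-2. u i * Lp q (ebas r i) k)"
    by (rule ext, rule sum.cong) (simp_all add: X)
  also have "\<dots> = Lp q (\<lambda>k. \<Sum>i\<le>r-2. u i * ebas r i k)" by (simp add: Lp_lin_y)
  also have "\<dots> = Lp q u" using Vq_expand[OF uV] by simp
  also have "\<dots> = Lp (p * q) (ebas r 0)" by (simp add: u_def Lp_mult[symmetric] mult.commute)
  finally show ?thesis by (simp add: u_def w_def)
qed

lemma Lp_sum: "finite A \<Longrightarrow> Lp (\<Sum>i\<in>A. f i) y = (\<lambda>k. \<Sum>i\<in>A. Lp (f i) y k)"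
  by (induction A rule: finite_induct) (simp_all add: Lp_add)

lemma image_Vq: "(\<lambda>p. Lp p (ebas r 0)) ` UNIV = Vq r"
proof
  show "(\<lambda>p. Lp p (ebas r 0)) ` UNIV \<subseteq> Vq r" using Lp_Vq ebas_Vq by auto
next
  show "Vq r \<subseteq> (\<lambda>p. Lp p (ebas r 0)) ` UNIV"
  proof
    fix x assume x: "x \<in> Vq r"
    have "Lp (\<Sum>i\<le>r-2. Polynomial.smult (x i) (Q i)) (ebas r 0) = (\<lambda>k. \<Sum>i\<le>r-2. x i * ebas r i k)"
      by (simp add: Lp_sum Lp_smult ebas_Q)
    also have "\<dots> = x" using Vq_expand[OF x] by simp
    finally show "x \<in> (\<lambda>p. Lp p (ebas r 0)) ` UNIV" by (metis rangeI)
  qed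
qed

end

context VQ begin

lemma Q_deg: "degree (Q n) = n \<and> coeff (Q n) n = 1 \<and> degree (Q (Suc n)) = Suc n \<and> coeff (Q (Suc n)) (Suc n) = 1"
proof (induction n)
  case 0 show ?case by (simp add: Q_0 Q_1)
next
  case (Suc n)
  define c where "c = rat_of_int (eps r s (Suc n) * eps r s (Suc (Suc n)))"
  have Qr: "Q (Suc (Suc n)) = pCons 0 (Q (Suc n)) + Polynomial.smult c (Q n)"
    by (simp add: Q_rec c_def)
  have nz: "Q (Suc n) \<noteq> 0" using Suc by auto
  have d1: "degree (pCons 0 (Q (Suc n))) = Suc (Suc n)" using Suc nz by simp
  have d2: "degree (Polynomial.smult c (Q n)) < Suc (Suc n)"
    using Suc degree_smult_le[of c "Q n"] by linarith
  have "degree (Q (Suc (Suc n))) = Suc (Suc n)"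
    unfolding Qr using d1 d2 by (simp add: degree_add_eq_left)
  moreover have "coeff (Q (Suc (Suc n))) (Suc (Suc n)) = 1"
    unfolding Qr using Suc by (simp add: coeff_eq_0)
  ultimately show ?case using Suc by simp
qed

lemma Q_degree: "degree (Q n) = n" and Q_coeff: "coeff (Q n) n = 1"
  using Q_deg by auto

lemma Q_nz: "Q n \<noteq> 0" using Q_coeff[of n] by auto

lemma Lp_coeff: "degree p \<le> d \<Longrightarrow> d \<le> r - 2 \<Longrightarrow> (\<forall>k>d. Lp p (ebas r 0) k = 0) \<and> Lp p (ebas r 0) d = coeff p d"
proof (induction d arbitrary: p)
  case 0
  then obtain c where p: "p = [:c:]" by (metis degree0_coeffs le_zero_eq)
  show ?case by (simp add: p Lp_pCons Lm_zero) (simp add: ebas_def)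
next
  case (Suc d)
  define c where "c = coeff p (Suc d)"
  define p' where "p' = p - Polynomial.smult c (Q (Suc d))"
  have "degree p' \<le> d"
  proof (rule degree_le, intro allI impI)
    fix i assume i: "d < i"
    show "coeff p' i = 0"
    proof (cases "i = Suc d")
      case True thus ?thesis by (simp add: p'_def c_def Q_coeff)
    next
      case False
      hence "Suc d < i" using i by simp
      thus ?thesis using Suc.prems Q_degree[of "Suc d"] by (simp add: p'_def coeff_eq_0)
    qed
  qed
  hence IH: "(\<forall>k>d. Lp p' (ebas r 0) k = 0) \<and> Lp p' (ebas r 0) d = coeff p' d"
    using Suc.prems by (intro Suc.IH) auto
  have pp: "p = p' + Polynomial.smult c (Q (Suc d))" by (simp add: p'_def)
  have "Lp p (ebas r 0) = (\<lambda>k. Lp p' (ebas r 0) k + c * ebas r (Suc d) k)"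
    using Suc.prems by (subst pp) (simp add: Lp_add Lp_smult ebas_Q)
  thus ?case using IH Suc.prems by (simp add: ebas_def c_def)
qed

lemma Lp_inj: assumes "degree p \<le> r - 2" "Lp p (ebas r 0) = (\<lambda>k. 0)" shows "p = 0"
proof -
  have "coeff p (degree p) = 0" using Lp_coeff[OF order.refl assms(1)] assms(2) by simp
  thus ?thesis by simp
qed

lemma Lp_Qtop: "Lp (Q (r - 1)) (ebas r 0) = (\<lambda>k. 0)"
proof -
  define m where "m = r - 3"
  have r1: "r - 1 = Suc (Suc m)" and r2: "r - 2 = Suc m" using r3 by (auto simp: m_def)
  have c1: "vmult r s (ebas r (Suc 0)) (ebas r (Suc m)) = vadd (vscale (- of_int (eps r s (Suc m) * eps r s (Suc (Suc m)))) (ebas r m)) (ebas r (Suc (Suc m)))"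
    using claim1[of "Suc m"] r2 by simp
  have e0: "ebas r (Suc (Suc m)) = (\<lambda>k. 0)" using r2 by (auto simp: ebas_def)
  show ?thesis unfolding r1 Q_rec Lp_add Lp_smult Lp_Xmult
    using ebas_Q[of "Suc m"] ebas_Q[of m] r2 c1 e0
    by (simp add: vadd_def vscale_def)
qed

lemma claim9: "Lp p (ebas r 0) = (\<lambda>_. 0) \<longleftrightarrow> Q (r - 1) dvd p"
proof
  assume "Q (r - 1) dvd p"
  then obtain h where "p = Q (r - 1) * h" by (auto elim: dvdE)
  hence "Lp p (ebas r 0) = Lp h (Lp (Q (r-1)) (ebas r 0))" by (simp add: Lp_mult[symmetric] mult.commute)
  hence "Lp p (ebas r 0) = Lp h (\<lambda>k. 0)" unfolding Lp_Qtop .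
  thus "Lp p (ebas r 0) = (\<lambda>_. 0)" by (simp add: Lp_zero_y)
next
  assume z: "Lp p (ebas r 0) = (\<lambda>_. 0)"
  define QQ where "QQ = Q (r - 1)"
  have "Lp p (ebas r 0) = Lp (p div QQ * QQ + p mod QQ) (ebas r 0)" by simp
  also have "\<dots> = (\<lambda>k. Lp (p mod QQ) (ebas r 0) k)"
    unfolding Lp_add Lp_mult QQ_def Lp_Qtop Lp_zero_y by simp
  finally have zm: "Lp (p mod QQ) (ebas r 0) = (\<lambda>_. 0)" using z by simp
  have "p mod QQ = 0"
  proof (rule ccontr)
    assume ne: "p mod QQ \<noteq> 0"
    have "degree (p mod QQ) < degree QQ" by (rule degree_mod_less'[OF _ ne]) (simp add: QQ_def Q_nz)
    hence "degree (p mod QQ) \<le> r - 2" using r3 by (simp add: QQ_def Q_degree)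
    thus False using Lp_inj zm ne by blast
  qed
  thus "Q (r - 1) dvd p" by (simp add: QQ_def mod_eq_0_iff_dvd)
qed

end

lemma parity: "(even n \<longrightarrow> odd k \<longrightarrow> coeff (Ppoly r s n) k = 0) \<and> (odd n \<longrightarrow> even k \<longrightarrow> coeff (Ppoly r s n) k = 0)"
proof (induction r s n arbitrary: k rule: Ppoly.induct)
  case (1 r s) show ?case by (auto simp: coeff_1 odd_pos)
next
  case (2 r s) show ?case by (auto simp: coeff_pCons split: nat.split)
next
  case (3 r s n)
  show ?case using "3.IH" by (auto simp: coeff_pCons split: nat.split)
qed


lemma tridiag_det:
  fixes f :: "nat \<Rightarrow> nat \<Rightarrow> 'a::comm_ring_1"
  assumes tri1: "\<And>k j. Suc j < k \<Longrightarrow> f k j = 0" and tri2: "\<And>k j. Suc k < j \<Longrightarrow> f k j = 0"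
  shows "det (mat (Suc (Suc n)) (Suc (Suc n)) (\<lambda>(k,j). f k j)) =
     f (Suc n) (Suc n) * det (mat (Suc n) (Suc n) (\<lambda>(k,j). f k j))
     - f (Suc n) n * f n (Suc n) * det (mat n n (\<lambda>(k,j). f k j))"
proof -
  define M where "M = mat (Suc (Suc n)) (Suc (Suc n)) (\<lambda>(k,j). f k j)"
  have Mc: "M \<in> carrier_mat (Suc (Suc n)) (Suc (Suc n))" by (simp add: M_def)
  define N where "N = mat (Suc n) (Suc n) (\<lambda>(k,j). f k (if j < n then j else Suc j))"
  have Nc: "N \<in> carrier_mat (Suc n) (Suc n)" by (simp add: N_def)
  have d1: "mat_delete M (Suc n) (Suc n) = mat (Suc n) (Suc n) (\<lambda>(k,j). f k j)"
    by (rule eq_matI) (auto simp: mat_delete_def M_def)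
  have d2: "mat_delete M (Suc n) n = N"
    by (rule eq_matI) (auto simp: mat_delete_def M_def N_def)
  have d3: "mat_delete N n n = mat n n (\<lambda>(k,j). f k j)"
    by (rule eq_matI) (auto simp: mat_delete_def N_def)
  have "det N = (\<Sum>i<Suc n. N $$ (i,n) * cofactor N i n)" by (rule laplace_expansion_column[OF Nc]) simp
  also have "\<dots> = (\<Sum>i\<in>{n}. N $$ (i,n) * cofactor N i n)"
    by (rule sum.mono_neutral_right) (auto simp: N_def tri2)
  also have "\<dots> = f n (Suc n) * det (mat n n (\<lambda>(k,j). f k j))"
    by (simp add: N_def cofactor_def d3[symmetric] N_def)
  finally have dN: "det N = f n (Suc n) * det (mat n n (\<lambda>(k,j). f k j))" .
  have "det M = (\<Sum>j<Suc (Suc n). M $$ (Suc n, j) * cofactor M (Suc n) j)"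
    by (rule laplace_expansion_row[OF Mc]) simp
  also have "\<dots> = (\<Sum>j\<in>{n, Suc n}. M $$ (Suc n, j) * cofactor M (Suc n) j)"
    by (rule sum.mono_neutral_right) (auto simp: M_def tri1)
  also have "\<dots> = f (Suc n) n * cofactor M (Suc n) n + f (Suc n) (Suc n) * cofactor M (Suc n) (Suc n)"
    by (simp add: M_def)
  also have "cofactor M (Suc n) (Suc n) = det (mat (Suc n) (Suc n) (\<lambda>(k,j). f k j))"
    by (simp add: cofactor_def d1)
  also have "cofactor M (Suc n) n = - det N"
    by (simp add: cofactor_def d2)
  finally show ?thesis unfolding M_def dN by (simp add: algebra_simps)
qed

context VQ begin

definition Am :: "nat \<Rightarrow> nat \<Rightarrow> rat" where
  "Am k j = (if k = j+1 then 1 else 0) - (if j = k+1 then rat_of_int (sg (k+1) * sg (k+2)) else 0)"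

definition gg :: "nat \<Rightarrow> nat \<Rightarrow> rat poly" where
  "gg k j = (if k = j then [:0, 1:] else 0) + [: - Am k j :]"

lemma multmat_eq: "multmat r s = mat (r-1) (r-1) (\<lambda>(k,j). Am k j)"
proof (rule eq_matI)
  fix k j assume k: "k < dim_row (mat (r-1) (r-1) (\<lambda>(k,j). Am k j))" and j: "j < dim_col (mat (r-1) (r-1) (\<lambda>(k,j). Am k j))"
  hence kj: "k \<le> r - 2" "j \<le> r - 2" by auto
  have "vmult r s (ebas r (Suc 0)) (ebas r j) k = Am k j"
    using kj by (simp add: Lm_formula) (auto simp: ebas_def Am_def)
  thus "multmat r s $$ (k, j) = mat (r-1) (r-1) (\<lambda>(k,j). Am k j) $$ (k, j)"
    using k j by (simp add: multmat_def)
qed (simp_all add: multmat_def)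

lemma cpm: "char_poly_matrix (multmat r s) = mat (r-1) (r-1) (\<lambda>(k,j). gg k j)"
  unfolding multmat_eq char_poly_matrix_def
  by (rule eq_matI) (auto simp: gg_def)

lemma D_eq: "Suc m \<le> r - 1 \<Longrightarrow> det (mat m m (\<lambda>(k,j). gg k j)) = Q m \<and> det (mat (Suc m) (Suc m) (\<lambda>(k,j). gg k j)) = Q (Suc m)"
proof (induction m)
  case 0
  have "det (mat (Suc 0) (Suc 0) (\<lambda>(k,j). gg k j)) = gg 0 0" by (subst det_single) auto
  thus ?case by (simp add: gg_def Am_def Q_0 Q_1)
next
  case (Suc m)
  hence IH: "det (mat m m (\<lambda>(k,j). gg k j)) = Q m" "det (mat (Suc m) (Suc m) (\<lambda>(k,j). gg k j)) = Q (Suc m)"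
    by auto
  have tri1: "\<And>k j. Suc j < k \<Longrightarrow> gg k j = 0" and tri2: "\<And>k j. Suc k < j \<Longrightarrow> gg k j = 0"
    by (auto simp: gg_def Am_def)
  have e: "eps r s (Suc m) * eps r s (Suc (Suc m)) = sg (Suc m) * sg (Suc (Suc m))"
    using Suc.prems by (simp add: eps_sg)
  have T: "det (mat (Suc (Suc m)) (Suc (Suc m)) (\<lambda>(k,j). gg k j)) =
     gg (Suc m) (Suc m) * det (mat (Suc m) (Suc m) (\<lambda>(k,j). gg k j))
     - gg (Suc m) m * gg m (Suc m) * det (mat m m (\<lambda>(k,j). gg k j))"
    by (rule tridiag_det) (simp_all add: tri1 tri2)
  have g1: "gg (Suc m) (Suc m) = [:0, 1:]" "gg (Suc m) m = [:-1:]"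
    "gg m (Suc m) = [: rat_of_int (sg (Suc m) * sg (Suc (Suc m))) :]"
    by (simp_all add: gg_def Am_def)
  have "det (mat (Suc (Suc m)) (Suc (Suc m)) (\<lambda>(k,j). gg k j)) = Q (Suc (Suc m))"
    unfolding T IH g1 Q_rec e by simp
  thus ?case using IH by simp
qed

lemma claim3: "char_poly (multmat r s) = Q (r - 1)"
proof -
  have "r - 1 = Suc (r - 2)" using r3 by simp
  thus ?thesis unfolding char_poly_def cpm using D_eq[of "r-2"] by auto
qed

end


theorem mainTheorem3:
  fixes r s :: nat
  assumes "3 \<le> r" "odd r" "odd s" "coprime r s" "0 < s" "s < r"
  shows
    "(\<forall>n \<le> r - 2. vmult r s (ebas r 1) (ebas r n) =
        vadd (if n = 0 then (\<lambda>_. 0)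
              else vscale (- of_int (eps r s n * eps r s (n + 1))) (ebas r (n - 1)))
             (ebas r (n + 1)))
   \<and> (\<forall>n \<le> r - 2. ebas r n = veval r s (map_poly of_int (Ppoly r s n)) (ebas r 1))
   \<and> char_poly (multmat r s) = map_poly of_int (Ppoly r s (r - 1))
   \<and> (\<forall>p q. veval r s (p * q) (ebas r 1) = vmult r s (veval r s p (ebas r 1)) (veval r s q (ebas r 1)))
   \<and> (\<forall>p q. veval r s (p + q) (ebas r 1) = vadd (veval r s p (ebas r 1)) (veval r s q (ebas r 1)))
   \<and> (\<forall>c p. veval r s (Polynomial.smult c p) (ebas r 1) = vscale c (veval r s p (ebas r 1)))
   \<and> veval r s 1 (ebas r 1) = ebas r 0
   \<and> (\<lambda>p. veval r s p (ebas r 1)) ` UNIV = Vq r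
   \<and> (\<forall>p. veval r s p (ebas r 1) = (\<lambda>_. 0) \<longleftrightarrow> map_poly of_int (Ppoly r s (r - 1)) dvd p)
   \<and> (\<forall>n \<le> r - 1. \<forall>k. (even n \<longrightarrow> odd k \<longrightarrow> coeff (Ppoly r s n) k = 0)
                      \<and> (odd n \<longrightarrow> even k \<longrightarrow> coeff (Ppoly r s n) k = 0))"
proof -
  interpret VQ r s using assms by unfold_locales auto
  have one: "ebas r 1 = ebas r (Suc 0)" by simp
  have V: "\<And>p. veval r s p (ebas r 1) = Lp p (ebas r 0)" unfolding one by (rule veval_Lp)
  have c1: "\<forall>n \<le> r - 2. vmult r s (ebas r 1) (ebas r n) =
        vadd (if n = 0 then (\<lambda>_. 0)
              else vscale (- of_int (eps r s n * eps r s (n + 1))) (ebas r (n - 1)))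
             (ebas r (n + 1))"
    unfolding one using claim1 by blast
  have c2: "\<forall>n \<le> r - 2. ebas r n = veval r s (map_poly of_int (Ppoly r s n)) (ebas r 1)"
    unfolding V using ebas_Q by (simp add: Q_def)
  have c3: "char_poly (multmat r s) = map_poly of_int (Ppoly r s (r - 1))"
    using claim3 by (simp add: Q_def)
  have c4: "\<forall>p q. veval r s (p * q) (ebas r 1) = vmult r s (veval r s p (ebas r 1)) (veval r s q (ebas r 1))"
    unfolding V using claim4 by blast
  have c5: "\<forall>p q. veval r s (p + q) (ebas r 1) = vadd (veval r s p (ebas r 1)) (veval r s q (ebas r 1))"
    unfolding V by (simp add: Lp_add vadd_def)
  have c6: "\<forall>c p. veval r s (Polynomial.smult c p) (ebas r 1) = vscale c (veval r s p (ebas r 1))"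
    unfolding V by (simp add: Lp_smult vscale_def)
  have c7: "veval r s 1 (ebas r 1) = ebas r 0"
    unfolding V by (rule Lp_1)
  have c8: "(\<lambda>p. veval r s p (ebas r 1)) ` UNIV = Vq r"
    unfolding V by (rule image_Vq)
  have c9: "\<forall>p. veval r s p (ebas r 1) = (\<lambda>_. 0) \<longleftrightarrow> map_poly of_int (Ppoly r s (r - 1)) dvd p"
    unfolding V using claim9 by (simp add: Q_def)
  have c10: "\<forall>n \<le> r - 1. \<forall>k. (even n \<longrightarrow> odd k \<longrightarrow> coeff (Ppoly r s n) k = 0)
                      \<and> (odd n \<longrightarrow> even k \<longrightarrow> coeff (Ppoly r s n) k = 0)"
    using parity by blast
  show ?thesis using c1 c2 c3 c4 c5 c6 c7 c8 c9 c10 by blast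
qed

end
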